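(* Let $\Sigma$ and $\Gamma$ be finite alphabets, each with at least two letters, and let $w \in \Sigma^+$. The following are equivalent: 1. $\mathrm{E}_{\mathcal{I}}(w) = \infty$. 2. $\mathrm{E}_{\mathcal{I}}(w) > |w|$. 3. There exist an injective morphism $h:\Sigma^*\to\Gamma^*$ and a letter $a \in \mathrm{alph}(w)$ such that $h(w) = x^r$ for some primitive word $x \in \Gamma^*$ and some rational $r$, and $|h(a)| \ge |x|$. 4. There exist an integer $k \ge 0$, a letter $a \in \Sigma$, words $w_1, w_2, w_3 \in (\Sigma \setminus \{a\})^*$ and an injective morphism $h:\Sigma^*\to\Gamma^*$ such that $w = w_1 (a w_2)^k a w_3$, $h(w_1)$ and $h(w_2)$ are suffix-comparable, and $h(w_2)$ and $h(w_3)$ are prefix-comparable.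
   Context: For a nonempty word $v$ and integer $p\ge 0$, $v^{p/|v|}$ denotes the prefix of length $p$ of the infinite word $vvv\cdots$. For a nonempty finite word $u$, its (fractional) exponent is $\mathrm{E}(u) = \sup\{ r \in \mathbb{Q} : u = v^r \text{ for some nonempty word } v\}$. A word $x$ is primitive if it is not of the form $y^k$ with $k \ge 2$ an integer. A morphism $h:\Sigma^*\to\Gamma^*$ satisfies $h(uv)=h(u)h(v)$ for all words $u,v$. $\mathcal{I}$ is the set of injective morphisms $\Sigma^* \to \Gamma^*$, and $\mathrm{E}_{\mathcal{I}}(w) = \sup\{\mathrm{E}(h(w)) : h \in \mathcal{I}\}$. $\mathrm{alph}(w)$ is the set of letters occurring in $w$. Words $u,v$ are prefix-comparable if $u$ is a prefix of $vs$ for some word $s$; suffix-comparable if $u$ is a suffix of $pv$ for some word $p$. *)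

theory Defs
  imports Complex_Main "HOL-Library.Extended_Real"
begin

text \<open>Words are lists. For nonempty v, frac_pow v p is the prefix of length p of v v v ...\<close>
definition frac_pow :: "'a list \<Rightarrow> nat \<Rightarrow> 'a list" where
  "frac_pow v p = take p (concat (replicate p v))"

definition is_rat_pow :: "'a list \<Rightarrow> 'a list \<Rightarrow> rat \<Rightarrow> bool" where
  "is_rat_pow u v r \<longleftrightarrow> v \<noteq> [] \<and>
     (\<exists>p::nat. of_nat p = r * of_nat (length v) \<and> u = frac_pow v p)"

definition word_exp :: "'a list \<Rightarrow> ereal" where
  "word_exp u = Sup {ereal (of_rat r) | r. \<exists>v. is_rat_pow u v r}"

definition is_morphism :: "('a list \<Rightarrow> 'b list) \<Rightarrow> bool" where
  "is_morphism h \<longleftrightarrow> (\<forall>u v. h (u @ v) = h u @ h v)"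

definition inj_morphisms :: "('a list \<Rightarrow> 'b list) set" where
  "inj_morphisms = {h. is_morphism h \<and> inj h}"

definition exp_I :: "('a list \<Rightarrow> 'b list) set \<Rightarrow> 'a list \<Rightarrow> ereal" where
  "exp_I I w = Sup {word_exp (h w) | h. h \<in> I}"

definition primitive :: "'a list \<Rightarrow> bool" where
  "primitive x \<longleftrightarrow> \<not> (\<exists>y k. k \<ge> 2 \<and> x = concat (replicate k y))"

definition prefix_comparable :: "'a list \<Rightarrow> 'a list \<Rightarrow> bool" where
  "prefix_comparable u v \<longleftrightarrow> (\<exists>s t. v @ s = u @ t)"

definition suffix_comparable :: "'a list \<Rightarrow> 'a list \<Rightarrow> bool" where
  "suffix_comparable u v \<longleftrightarrow> (\<exists>p q. p @ v = q @ u)"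

end

theory Submission
  imports Defs
begin

lemma length_concat_replicate[simp]: "length (concat (replicate k z)) = k * length z"
  by (induction k) auto

lemma nth_concat_replicate:
  "i < k * length z \<Longrightarrow> concat (replicate k z) ! i = z ! (i mod length z)"
proof (induction k arbitrary: i)
  case 0 then show ?case by simp
next
  case (Suc k)
  show ?case
  proof (cases "i < length z")
    case True then show ?thesis by (simp add: nth_append)
  next
    case False
    then have "i - length z < k * length z" using Suc.prems by auto
    then show ?thesis using False Suc.IH by (simp add: nth_append le_mod_geq)
  qed
qed

lemma concat_replicate_add: "concat (replicate (a + b) z) = concat (replicate a z) @ concat (replicate b z)"
  by (simp add: replicate_add)

lemma concat_replicate_mult: "concat (replicate a (concat (replicate b z))) = concat (replicate (a * b) z)"
  by (induction a) (auto simp: replicate_add)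

lemma length_frac_pow: "v \<noteq> [] \<Longrightarrow> length (frac_pow v p) = p"
  unfolding frac_pow_def by (cases v) auto

lemma nth_frac_pow: "v \<noteq> [] \<Longrightarrow> i < p \<Longrightarrow> frac_pow v p ! i = v ! (i mod length v)"
  unfolding frac_pow_def
  apply (subst nth_take, simp)
  apply (rule nth_concat_replicate)
  by (metis Suc_leI le_less_trans length_greater_0_conv mult_le_mono1 mult_Suc less_le_trans
        le_add1 mult.commute nat_mult_le_cancel_disj less_eq_Suc_le)

lemma frac_pow_eqI:
  assumes "v \<noteq> []" "length W = p" "\<And>i. i < p \<Longrightarrow> W ! i = v ! (i mod length v)"
  shows "W = frac_pow v p"
  by (rule nth_equalityI) (use assms in \<open>auto simp: length_frac_pow nth_frac_pow\<close>)

lemma word_exp_ge: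
  assumes "v \<noteq> []" "W = frac_pow v (length W)"
  shows "ereal (real (length W) / real (length v)) \<le> word_exp W"
proof -
  define r :: rat where "r = of_nat (length W) / of_nat (length v)"
  have "is_rat_pow W v r" unfolding is_rat_pow_def r_def using assms by auto
  moreover have "of_rat r = real (length W) / real (length v)"
    unfolding r_def by (simp add: of_rat_divide)
  ultimately show ?thesis unfolding word_exp_def
    by (intro Sup_upper) (metis (mono_tags, lifting) mem_Collect_eq)
qed

lemma mor_Nil: "is_morphism h \<Longrightarrow> h [] = []"
proof -
  assume "is_morphism h"
  then have "h ([] @ []) = h [] @ h []" unfolding is_morphism_def by blast
  then have "h [] = h [] @ h []" by simp
  then show "h [] = []" by (metis self_append_conv)
qed

lemma mor_app: "is_morphism h \<Longrightarrow> h (u @ v) = h u @ h v"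
  unfolding is_morphism_def by blast

lemma mor_Cons: "is_morphism h \<Longrightarrow> v \<noteq> [] \<Longrightarrow> h (c # v) = h [c] @ h v"
  using mor_app[of h "[c]" v] by simp

lemma mor_concat_replicate: "is_morphism h \<Longrightarrow> h (concat (replicate k y)) = concat (replicate k (h y))"
  by (induction k) (auto simp: mor_Nil mor_app)

lemma mor_length_bound: "is_morphism h \<Longrightarrow> (\<forall>c\<in>set w. length (h [c]) \<le> m) \<Longrightarrow> length (h w) \<le> length w * m"
proof (induction w)
  case (Cons c w)
  have "h (c # w) = h [c] @ h w" using mor_app[OF Cons.prems(1), of "[c]" w] by simp
  then show ?case using Cons by auto
qed (simp add: mor_Nil)

lemma inj_mor_nonempty: "h \<in> inj_morphisms \<Longrightarrow> w \<noteq> [] \<Longrightarrow> h w \<noteq> []"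
proof
  assume "h \<in> inj_morphisms" "w \<noteq> []" "h w = []"
  then have "h w = h []" "inj h" unfolding inj_morphisms_def by (auto simp: mor_Nil)
  then show False using \<open>w \<noteq> []\<close> by (simp add: inj_eq)
qed

lemma periodic_nonprim:
  assumes n: "length x = n" "0 < g" "g < n" "g dvd n"
    and per: "\<And>i. i < n \<Longrightarrow> x ! i = x ! (i mod g)"
  shows "\<not> primitive x"
proof -
  obtain q where q: "n = g * q" using n(4) by blast
  have qd: "n div g = q" using q n(2) by simp
  have lt: "length (take g x) = g" using n(1,3) by simp
  have "x = concat (replicate q (take g x))"
  proof (rule nth_equalityI)
    show "length x = length (concat (replicate q (take g x)))"
      using n(1) q lt by (simp add: mult.commute)
    fix i assume i: "i < length x"
    then have "i < q * length (take g x)" using n(1) q lt by (simp add: mult.commute)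
    then have "concat (replicate q (take g x)) ! i = take g x ! (i mod g)"
      using lt nth_concat_replicate by metis
    also have "\<dots> = x ! (i mod g)" using n(2) by simp
    also have "\<dots> = x ! i" using per[of i] n(1) i by simp
    finally show "x ! i = concat (replicate q (take g x)) ! i" by simp
  qed
  moreover have "q \<noteq> 0" "q \<noteq> 1" using q n(2,3) by auto
  then have "q \<ge> 2" by linarith
  ultimately show ?thesis unfolding primitive_def by blast
qed

lemma rotate_self_nonprim:
  assumes "rotate d x = x" "0 < d" "d < length x"
  shows "\<not> primitive x"
proof -
  define n where "n = length x"
  have n0: "n > 0" using assms n_def by auto
  have step: "x ! (i mod n) = x ! ((i + d) mod n)" for i
  proof -
    have "rotate d x ! (i mod n) = x ! ((d + i mod n) mod n)"
      using n0 by (simp add: nth_rotate n_def)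
    then show ?thesis using assms(1) by (simp add: mod_add_right_eq add.commute)
  qed
  have iter: "x ! (i mod n) = x ! ((i + j * d) mod n)" for i j
  proof (induction j)
    case 0 then show ?case by simp
  next
    case (Suc j)
    then show ?case by (metis step add.assoc mult_Suc add.commute)
  qed
  define g where "g = gcd d n"
  obtain j y where jy: "d * j = n * y + g"
    using bezout_nat[of d n] assms(2) g_def by auto
  have g0: "0 < g" "g \<le> d" using assms g_def by auto
  have gn: "g < n" using assms g0 n_def by linarith
  have gd: "g dvd n" unfolding g_def by simp
  have stepg: "x ! (i mod n) = x ! ((i + g) mod n)" for i
  proof -
    have "(i + j * d) mod n = (i + g) mod n"
      using jy by (metis mod_add_right_eq mod_mult_self3 mult.commute add.commute)
    then show ?thesis using iter[of i j] by simp
  qed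
  have "x ! i = x ! (i mod g)" if "i < n" for i
    using that
  proof (induction i rule: less_induct)
    case (less i)
    show ?case
    proof (cases "i < g")
      case True then show ?thesis by simp
    next
      case False
      then have "x ! i = x ! ((i - g) mod n)"
        using stepg[of "i - g"] less.prems by simp
      also have "\<dots> = x ! (i - g)" using less.prems by simp
      also have "\<dots> = x ! ((i - g) mod g)" using less.IH[of "i - g"] less.prems g0 False by simp
      also have "\<dots> = x ! (i mod g)" using False by (simp add: le_mod_geq)
      finally show ?thesis .
    qed
  qed
  then show ?thesis using periodic_nonprim[of x n g] n_def g0 gn gd by blast
qed

lemma rotate_inj_prim:
  assumes "primitive x" "rotate r x = rotate s x"
  shows "r mod length x = s mod length x"
proof -
  define n where "n = length x"
  have "x \<noteq> []" using assms(1) unfolding primitive_def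
    by (metis concat_replicate_trivial le_add2 numeral_1_eq_Suc_0 one_add_one)
  then have n0: "n > 0" by (simp add: n_def)
  define r' s' where "r' = r mod n" "s' = s mod n"
  have rr: "rotate r' x = rotate s' x" using assms(2)
    by (metis n_def r'_s'_def rotate_conv_mod)
  have lt: "r' < n" "s' < n" using n0 r'_s'_def by auto
  have F: False if "r' < s'" "rotate r' x = rotate s' x" "r' < n" "s' < n" for r' s'
  proof -
    have "rotate (n - s') (rotate r' x) = rotate (n - s') (rotate s' x)" using that by simp
    moreover have "rotate (n - s') (rotate r' x) = rotate (n - s' + r') x" by (simp add: rotate_rotate)
    moreover have "rotate (n - s') (rotate s' x) = rotate (n - s' + s') x" by (simp add: rotate_rotate)
    moreover have "n - s' + s' = n" using that by simp
    ultimately have "rotate (n - s' + r') x = x" by (simp add: n_def)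
    then show False using rotate_self_nonprim[of "n - s' + r'" x] that assms(1) n_def by linarith
  qed
  have "r' = s'"
  proof (rule ccontr)
    assume "r' \<noteq> s'"
    then consider "r' < s'" | "s' < r'" by linarith
    then show False using F rr lt by metis
  qed
  then show ?thesis using r'_s'_def n_def by simp
qed

lemma primitive_root:
  "v \<noteq> [] \<Longrightarrow> \<exists>x j. primitive x \<and> j \<ge> 1 \<and> v = concat (replicate j x)"
proof (induction "length v" arbitrary: v rule: less_induct)
  case less
  show ?case
  proof (cases "primitive v")
    case True then show ?thesis by (intro exI[of _ v] exI[of _ 1]) auto
  next
    case False
    then obtain y k where yk: "k \<ge> 2" "v = concat (replicate k y)" unfolding primitive_def by blast
    then have "y \<noteq> []" using less.prems by auto
    then have "length y < length v" using yk by (simp add: less_le_trans[of _ "2 * length y"])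
    then obtain x j where "primitive x" "j \<ge> 1" "y = concat (replicate j x)"
      using less.hyps \<open>y \<noteq> []\<close> by blast
    then show ?thesis using yk
      by (intro exI[of _ x] exI[of _ "k * j"]) (auto simp: concat_replicate_mult)
  qed
qed

definition dbl :: "'b list \<Rightarrow> 'b list" where
  "dbl xs = concat (map (\<lambda>x. [x, x]) xs)"

lemma dbl_simps[simp]: "dbl [] = []" "dbl (x # xs) = x # x # dbl xs" "dbl (xs @ ys) = dbl xs @ dbl ys"
  "length (dbl xs) = 2 * length xs"
  unfolding dbl_def by (induction xs) auto

lemma dbl_inj: "dbl A = dbl B \<Longrightarrow> A = B"
proof (induction A arbitrary: B)
  case Nil then show ?case by (cases B) auto
next
  case (Cons x A) then show ?case by (cases B) auto
qed

lemma dbl_split: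
  assumes "c \<noteq> d" "dbl A @ c # d # B = dbl A' @ c # d # B'"
  shows "A = A' \<and> B = B'"
  using assms
proof (induction A arbitrary: A')
  case Nil then show ?case by (cases A') auto
next
  case (Cons x A) then show ?case by (cases A') auto
qed

lemma dbl_split2:
  assumes "c \<noteq> d"
  shows "dbl A @ c # d # B \<noteq> dbl A'"
  using assms
proof (induction A arbitrary: A')
  case Nil then show ?case by (cases A') auto
next
  case (Cons x A) then show ?case by (cases A') auto
qed

definition gm :: "('a \<Rightarrow> 'b list) \<Rightarrow> 'a list \<Rightarrow> 'b list" where
  "gm G xs = concat (map G xs)"

lemma gm_simps[simp]: "gm G [] = []" "gm G (x # xs) = G x @ gm G xs" "gm G (xs @ ys) = gm G xs @ gm G ys"
  unfolding gm_def by auto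

lemma gm_morphism: "is_morphism (gm G)"
  unfolding is_morphism_def by simp

lemma mor_single: "is_morphism h \<Longrightarrow> h (c # v) = h [c] @ h v"
  using mor_app[of h "[c]" v] by simp

lemma gm_free:
  assumes "is_morphism h" "\<And>b. b \<noteq> a \<Longrightarrow> G b = dbl (h [b])" "a \<notin> set x"
  shows "gm G x = dbl (h x)"
  using assms(3)
proof (induction x)
  case Nil then show ?case using assms(1) by (simp add: mor_Nil)
next
  case (Cons b x)
  have "h (b # x) = h [b] @ h x" by (rule mor_single[OF assms(1)])
  moreover have "G b = dbl (h [b])" using Cons.prems assms(2) by auto
  ultimately show ?case using Cons.IH Cons.prems by simp
qed

lemma gm_inj:
  assumes hm: "is_morphism h" and hi: "inj h" and cd: "c \<noteq> d"
    and Ga: "G a = dbl t @ c # d # R"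
    and Gb: "\<And>b. b \<noteq> a \<Longrightarrow> G b = dbl (h [b])"
  shows "inj (gm G)"
proof -
  have "\<forall>y. gm G x = gm G y \<longrightarrow> x = y" for x
  proof (induction x rule: length_induct)
    case (1 x)
    show ?case
    proof (intro allI impI)
      fix y assume eq: "gm G x = gm G y"
      show "x = y"
      proof (cases "a \<in> set x")
        case True
        then obtain x0 x1 where x: "x = x0 @ a # x1" "a \<notin> set x0" by (metis split_list_first)
        have gx: "gm G x = dbl (h x0 @ t) @ c # d # (R @ gm G x1)"
          using x gm_free[OF hm Gb, where x=x0] Ga by simp
        show ?thesis
        proof (cases "a \<in> set y")
          case True
          then obtain y0 y1 where y: "y = y0 @ a # y1" "a \<notin> set y0" by (metis split_list_first)
          have gy: "gm G y = dbl (h y0 @ t) @ c # d # (R @ gm G y1)"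
            using y gm_free[OF hm Gb, where x=y0] Ga by simp
          have "dbl (h x0 @ t) @ c # d # (R @ gm G x1) = dbl (h y0 @ t) @ c # d # (R @ gm G y1)"
            using eq gx gy by simp
          then have e: "h x0 @ t = h y0 @ t" "R @ gm G x1 = R @ gm G y1" using dbl_split[OF cd] by blast+
          then have "h x0 = h y0" by simp
          then have "x0 = y0" using hi by (simp add: inj_eq)
          have "length x1 < length x" using x by simp
          then have "x1 = y1" using 1 e(2) by simp
          then show ?thesis using x y \<open>x0 = y0\<close> by simp
        next
          case False
          then have "gm G y = dbl (h y)" using gm_free[OF hm Gb] by blast
          then have "dbl (h x0 @ t) @ c # d # (R @ gm G x1) = dbl (h y)" using eq gx by simp
          then show ?thesis using dbl_split2[OF cd] by blast
        qed
      next
        case False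
        then have gx: "gm G x = dbl (h x)" using gm_free[OF hm Gb] by blast
        show ?thesis
        proof (cases "a \<in> set y")
          case True
          then obtain y0 y1 where y: "y = y0 @ a # y1" "a \<notin> set y0" by (metis split_list_first)
          have gy: "gm G y = dbl (h y0 @ t) @ c # d # (R @ gm G y1)"
            using y gm_free[OF hm Gb, where x=y0] Ga by simp
          then have "dbl (h y0 @ t) @ c # d # (R @ gm G y1) = dbl (h x)" using eq gx by simp
          then show ?thesis using dbl_split2[OF cd] by blast
        next
          case False
          then have "gm G y = dbl (h y)" using gm_free[OF hm Gb] by blast
          then have "h x = h y" using eq gx dbl_inj by metis
          then show ?thesis using hi by (simp add: inj_eq)
        qed
      qed
    qed
  qed
  then show ?thesis by (meson injI)
qed

lemma periodic_frac:
  assumes Q: "Q = P @ S" "Q \<noteq> []" and T: "concat (replicate M Q) = T @ R"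
  shows "S @ T = frac_pow (S @ P) (length (S @ T))"
proof (rule frac_pow_eqI)
  show "S @ P \<noteq> []" using Q by auto
  show "length (S @ T) = length (S @ T)" ..
  fix i assume i: "i < length (S @ T)"
  have lq: "length (S @ P) = length Q" using Q by simp
  show "(S @ T) ! i = (S @ P) ! (i mod length (S @ P))"
  proof (cases "i < length S")
    case True
    then have "i mod length Q = i" using Q by simp
    then show ?thesis using True lq by (simp add: nth_append)
  next
    case False
    define j where "j = i - length S"
    have jT: "j < length T" using i False j_def by simp
    have "length T \<le> M * length Q" using T by (metis le_add1 length_append length_concat_replicate)
    then have jM: "j < M * length Q" using jT by simp
    have "(S @ T) ! i = T ! j" using False j_def by (simp add: nth_append)
    also have "\<dots> = concat (replicate M Q) ! j" using T jT by (simp add: nth_append)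
    also have "\<dots> = Q ! (j mod length Q)" using jM nth_concat_replicate by blast
    also have "\<dots> = (S @ P) ! ((length S + j mod length Q) mod length (S @ P))"
    proof -
      have QR: "Q = rotate (length S) (S @ P)" using Q by (simp add: rotate_append)
      have "length Q > 0" using Q by simp
      then have "j mod length Q < length (S @ P)" using lq by simp
      then have "rotate (length S) (S @ P) ! (j mod length Q) = (S @ P) ! ((length S + j mod length Q) mod length (S @ P))"
        by (rule nth_rotate)
      then show ?thesis using QR by simp
    qed
    also have "(length S + j mod length Q) mod length (S @ P) = i mod length (S @ P)"
      using lq False j_def by (simp add: mod_add_right_eq)
    finally show ?thesis .
  qed
qed

lemma XY_power: "X @ concat (replicate n (Y @ X)) @ Y = concat (replicate (Suc n) (X @ Y))"
proof (induction n)
  case 0 then show ?case by simp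
next
  case (Suc n)
  have "X @ concat (replicate (Suc n) (Y @ X)) @ Y = (X @ Y) @ (X @ concat (replicate n (Y @ X)) @ Y)" by simp
  also have "\<dots> = concat (replicate (Suc (Suc n)) (X @ Y))" using Suc by simp
  finally show ?case .
qed

lemma exp_I_ge: "h \<in> I \<Longrightarrow> word_exp (h w) \<le> exp_I I w"
  unfolding exp_I_def by (rule Sup_upper) blast

lemma ereal_unbounded_inf:
  assumes "\<And>n::nat. ereal (real n) \<le> (x::ereal)"
  shows "x = \<infinity>"
proof (rule ccontr)
  assume ne: "x \<noteq> \<infinity>"
  have "x \<ge> ereal 0" using assms[of 0] by simp
  then have "x \<noteq> -\<infinity>" by auto
  then have xr: "x = ereal (real_of_ereal x)" using ne by (cases x) auto
  obtain n :: nat where "real_of_ereal x < real n" using reals_Archimedean2 by blast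
  then have "x < ereal (real n)" using xr by (metis ereal_less_eq(3) linorder_not_le)
  then show False using assms[of n] by simp
qed

lemma four_imp_one:
  fixes h :: "'a list \<Rightarrow> 'b list"
  assumes cd: "(c::'b) \<noteq> d" and hI: "h \<in> inj_morphisms"
    and a: "a \<notin> set w1" "a \<notin> set w2" "a \<notin> set w3"
    and w: "w = w1 @ concat (replicate k (a # w2)) @ a # w3"
    and sc: "suffix_comparable (h w1) (h w2)" and pc: "prefix_comparable (h w2) (h w3)"
  shows "exp_I (inj_morphisms :: ('a list \<Rightarrow> 'b list) set) w = \<infinity>"
proof (rule ereal_unbounded_inf)
  fix n :: nat
  have hm: "is_morphism h" and hi: "inj h" using hI unfolding inj_morphisms_def by auto
  obtain t' q where tq: "t' @ h w2 = q @ h w1" using sc unfolding suffix_comparable_def by blast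
  obtain s t where st: "h w3 @ s = h w2 @ t" using pc unfolding prefix_comparable_def by blast
  define u where "u = h w2"
  define X where "X = dbl t @ [c, d]"
  define Y where "Y = dbl (t' @ u)"
  define R where "R = concat (replicate n (Y @ X)) @ dbl t'"
  define Ga where "Ga = X @ R"
  define G where "G = (\<lambda>b. if b = a then Ga else dbl (h [b]))"
  define g where "g = gm G"
  define Q where "Q = X @ Y"
  have Gb: "\<And>b. b \<noteq> a \<Longrightarrow> G b = dbl (h [b])" unfolding G_def by simp
  have GA: "G a = dbl t @ c # d # R" unfolding G_def Ga_def X_def by simp
  have gI: "g \<in> inj_morphisms" unfolding inj_morphisms_def g_def
    using gm_morphism gm_inj[OF hm hi cd GA Gb] by blast
  have gf: "g x = dbl (h x)" if "a \<notin> set x" for x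
    unfolding g_def using gm_free[OF hm Gb that] .
  have gmor: "is_morphism g" unfolding g_def by (rule gm_morphism)
  have gapp: "g (x @ y) = g x @ g y" for x y unfolding g_def by simp
  have ga: "g [a] = Ga" unfolding g_def G_def by simp
  have gaw2: "g (a # w2) = concat (replicate (Suc n) Q)"
  proof -
    have "g (a # w2) = Ga @ dbl u" using gapp[of "[a]" w2] ga gf[OF a(2)] u_def by simp
    also have "\<dots> = X @ concat (replicate n (Y @ X)) @ Y" unfolding Ga_def R_def Y_def by simp
    also have "\<dots> = concat (replicate (Suc n) Q)" unfolding Q_def by (rule XY_power)
    finally show ?thesis .
  qed
  have gpow: "g (concat (replicate k (a # w2))) = concat (replicate (k * Suc n) Q)"
    using mor_concat_replicate[OF gmor] gaw2 concat_replicate_mult by metis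
  define S where "S = dbl (h w1)"
  define P where "P = X @ dbl q"
  define T where "T = concat (replicate (k * Suc n) Q) @ Ga @ dbl (h w3)"
  have gw: "g w = S @ T"
  proof -
    have "g w = g w1 @ g (concat (replicate k (a # w2))) @ g [a] @ g w3"
      using w gapp by (metis append_Cons append_Nil)
    then show ?thesis unfolding S_def T_def using gf[OF a(1)] gf[OF a(3)] gpow ga by simp
  qed
  have QPS: "Q = P @ S" unfolding Q_def P_def S_def Y_def u_def using tq by (metis append_assoc dbl_simps(3))
  have Qne: "Q \<noteq> []" unfolding Q_def X_def by simp
  have TR: "concat (replicate (k * Suc n + Suc n + 1) Q) = T @ (dbl s @ [c, d] @ Y)"
  proof -
    have "T @ (dbl s @ [c, d] @ Y) = concat (replicate (k * Suc n) Q) @ (Ga @ dbl (h w3 @ s)) @ [c, d] @ Y"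
      unfolding T_def by simp
    also have "Ga @ dbl (h w3 @ s) = (Ga @ dbl u) @ dbl t" using st u_def by simp
    also have "Ga @ dbl u = concat (replicate (Suc n) Q)"
      using gaw2 gapp[of "[a]" w2] ga gf[OF a(2)] u_def by simp
    finally have "T @ (dbl s @ [c, d] @ Y) = concat (replicate (k * Suc n) Q) @ concat (replicate (Suc n) Q) @ Q"
      unfolding Q_def X_def by simp
    moreover have "concat (replicate (k * Suc n + Suc n + 1) Q) = concat (replicate (k * Suc n) Q) @ concat (replicate (Suc n) Q) @ concat (replicate 1 Q)"
      by (simp only: concat_replicate_add append_assoc)
    ultimately show ?thesis by simp
  qed
  have per: "S @ T = frac_pow (S @ P) (length (S @ T))"
    by (rule periodic_frac[OF QPS Qne TR])
  have SPne: "S @ P \<noteq> []" using QPS Qne by auto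
  have lSP: "length (S @ P) = length Q" using QPS by simp
  have "ereal (real (length (S @ T)) / real (length (S @ P))) \<le> word_exp (S @ T)"
    by (rule word_exp_ge[OF SPne per])
  moreover have "real n \<le> real (length (S @ T)) / real (length (S @ P))"
  proof -
    have "length Ga \<ge> n * length Q"
      unfolding Ga_def R_def Q_def by (simp add: add.commute)
    then have "length (S @ T) \<ge> n * length Q" unfolding T_def by simp
    then have "real (length (S @ T)) \<ge> real n * real (length Q)"
      by (metis of_nat_le_iff of_nat_mult)
    moreover have "real (length Q) > 0" using Qne by simp
    ultimately show ?thesis using lSP by (simp add: pos_le_divide_eq)
  qed
  ultimately have "ereal (real n) \<le> word_exp (g w)" using gw
    by (metis ereal_less_eq(3) order_trans)
  also have "\<dots> \<le> exp_I (inj_morphisms :: ('a list \<Rightarrow> 'b list) set) w" using exp_I_ge[OF gI, of w] by simp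
  finally show "ereal (real n) \<le> exp_I (inj_morphisms :: ('a list \<Rightarrow> 'b list) set) w" .
qed

lemma two_imp_three:
  fixes w :: "'a list" and I :: "('a list \<Rightarrow> 'b list) set"
  assumes gt: "exp_I I w > ereal (real (length w))" and I: "I = inj_morphisms"
  shows "\<exists>h\<in>I. \<exists>a\<in>set w. \<exists>x r. primitive x \<and> is_rat_pow (h w) x r \<and> length (h [a]) \<ge> length x"
proof -
  obtain h where hI: "h \<in> I" and h1: "ereal (real (length w)) < word_exp (h w)"
    using gt unfolding exp_I_def less_Sup_iff by blast
  then obtain r v where rv: "is_rat_pow (h w) v r" and r1: "ereal (real (length w)) < ereal (of_rat r)"
    unfolding word_exp_def less_Sup_iff by blast
  from rv obtain p where v0: "v \<noteq> []" and p: "of_nat p = r * of_nat (length v)" and hw: "h w = frac_pow v p"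
    unfolding is_rat_pow_def by blast
  have lhw: "length (h w) = p" using hw v0 length_frac_pow by metis
  have "real p = of_rat r * real (length v)" using p by (metis of_rat_mult of_rat_of_nat_eq)
  moreover have "real (length w) < of_rat r" using r1 by simp
  moreover have "real (length v) > 0" using v0 by simp
  ultimately have "real (length w) * real (length v) < real p" by simp
  then have pl: "length w * length v < p" by (metis of_nat_less_iff of_nat_mult)
  obtain x j where x: "primitive x" "j \<ge> 1" "v = concat (replicate j x)" using primitive_root[OF v0] by blast
  have x0: "x \<noteq> []" using x v0 by auto
  have lv: "length v = j * length x" using x by simp
  have hwx: "h w = frac_pow x p"
  proof (rule frac_pow_eqI[OF x0 lhw])
    fix i assume i: "i < p"
    have "h w ! i = v ! (i mod length v)" using hw nth_frac_pow[OF v0 i] by simp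
    also have "\<dots> = x ! (i mod length v mod length x)"
    proof -
      have "i mod length v < j * length x" using lv v0 by (metis length_greater_0_conv mod_less_divisor)
      then show ?thesis using x(3) lv nth_concat_replicate by metis
    qed
    also have "\<dots> = x ! (i mod length x)" using lv by (simp add: mod_mod_cancel)
    finally show "h w ! i = x ! (i mod length x)" .
  qed
  have rp: "is_rat_pow (h w) x (of_nat p / of_nat (length x))"
    unfolding is_rat_pow_def using x0 hwx by auto
  have "\<exists>a\<in>set w. length (h [a]) \<ge> length x"
  proof (rule ccontr)
    assume "\<not> ?thesis"
    then have "\<forall>c\<in>set w. length (h [c]) \<le> length x" by auto
    moreover have "is_morphism h" using hI I unfolding inj_morphisms_def by auto
    ultimately have "length (h w) \<le> length w * length x" using mor_length_bound by blast
    moreover have "length w * length x \<le> length w * length v" using lv x(2) by simp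
    ultimately show False using pl lhw by simp
  qed
  then show ?thesis using hI x(1) rp by blast
qed

lemma takeWhile_pow:
  assumes "a \<notin> set v" "m \<ge> 1"
  shows "takeWhile (\<lambda>c. c \<noteq> a) (tl (concat (replicate m (a # v)))) = v"
proof -
  obtain m' where m: "m = Suc m'" using assms(2) by (cases m) auto
  have "tl (concat (replicate m (a # v))) = v @ concat (replicate m' (a # v))" using m by simp
  moreover have "takeWhile (\<lambda>c. c \<noteq> a) (concat (replicate m' (a # v))) = []" by (cases m') auto
  moreover have "takeWhile (\<lambda>c. c \<noteq> a) (v @ concat (replicate m' (a # v))) = v @ takeWhile (\<lambda>c. c \<noteq> a) (concat (replicate m' (a # v)))"
    by (rule takeWhile_append2) (use assms(1) in auto)
  ultimately show ?thesis by simp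
qed

lemma decomp:
  assumes gap: "\<And>pre v' post. w = pre @ a # v' @ a # post \<Longrightarrow> a \<notin> set v' \<Longrightarrow> v' = v"
  shows "w = pre @ a # s \<Longrightarrow> \<exists>k w3. a \<notin> set w3 \<and> a # s = concat (replicate k (a # v)) @ a # w3"
proof (induction "length s" arbitrary: pre s rule: less_induct)
  case less
  show ?case
  proof (cases "a \<in> set s")
    case False
    then show ?thesis by (intro exI[of _ 0] exI[of _ s]) simp
  next
    case True
    then obtain v' s' where s: "s = v' @ a # s'" "a \<notin> set v'" by (metis split_list_first)
    have "w = pre @ a # v' @ a # s'" using less.prems s(1) by simp
    then have "v' = v" using gap s(2) by blast
    have "w = (pre @ a # v') @ a # s'" using less.prems s by simp
    moreover have "length s' < length s" using s by simp
    ultimately obtain k w3 where "a \<notin> set w3" "a # s' = concat (replicate k (a # v)) @ a # w3"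
      using less.hyps by blast
    then show ?thesis using s \<open>v' = v\<close>
      by (intro exI[of _ "Suc k"] exI[of _ w3]) simp
  qed
qed

lemma mod_add_dvd:
  fixes A L n :: nat
  assumes "(A + L) mod n = A mod n"
  shows "n dvd L"
  using assms mod_eq_dvd_iff_nat[of A "A + L" n] by simp

lemma three_imp_four:
  fixes h :: "'a list \<Rightarrow> 'b list"
  assumes hI: "h \<in> inj_morphisms" and aw: "a \<in> set w" and xp: "primitive x"
    and rp: "is_rat_pow (h w) x r" and ha: "length (h [a]) \<ge> length x"
  shows "\<exists>(k::nat) (a::'a) w1 w2 w3. \<exists>h\<in>(inj_morphisms :: ('a list \<Rightarrow> 'b list) set).
              a \<notin> set w1 \<and> a \<notin> set w2 \<and> a \<notin> set w3 \<and>
              w = w1 @ concat (replicate k (a # w2)) @ a # w3 \<and>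
              suffix_comparable (h w1) (h w2) \<and> prefix_comparable (h w2) (h w3)"
proof -
  have hm: "is_morphism h" and hi: "inj h" using hI unfolding inj_morphisms_def by auto
  define n where "n = length x"
  from rp obtain p where x0: "x \<noteq> []" and hw: "h w = frac_pow x p"
    unfolding is_rat_pow_def by blast
  have n0: "n > 0" using x0 n_def by simp
  have lhw: "length (h w) = p" using hw x0 length_frac_pow by metis
  have hwi: "h w ! i = x ! (i mod n)" if "i < length (h w)" for i
    using hw nth_frac_pow[OF x0, of i p] that lhw n_def by simp
  have F: "h mid ! l = x ! ((length (h pre) + l) mod n)"
    if "w = pre @ mid @ post" "l < length (h mid)" for pre mid post l
  proof -
    have "h w = h pre @ h mid @ h post" using that(1) mor_app[OF hm] by simp
    then have "h mid ! l = h w ! (length (h pre) + l)" and "length (h pre) + l < length (h w)"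
      using that(2) by (simp_all add: nth_append)
    then show ?thesis using hwi by simp
  qed
  have phase: "length (h pre) mod n = length (h pre') mod n"
    if "w = pre @ a # post" "w = pre' @ a # post'" for pre post pre' post'
  proof -
    have "rotate (length (h pre)) x = rotate (length (h pre')) x"
    proof (rule nth_equalityI)
      show "length (rotate (length (h pre)) x) = length (rotate (length (h pre')) x)" by simp
      fix l assume "l < length (rotate (length (h pre)) x)"
      then have l: "l < n" using n_def by simp
      then have lh: "l < length (h [a])" using ha n_def by simp
      have "rotate (length (h pre)) x ! l = x ! ((length (h pre) + l) mod n)"
        using l n_def by (simp add: nth_rotate)
      also have "\<dots> = h [a] ! l" using F[of pre "[a]" post l] that(1) lh by simp
      also have "\<dots> = x ! ((length (h pre') + l) mod n)" using F[of pre' "[a]" post' l] that(2) lh by simp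
      also have "\<dots> = rotate (length (h pre')) x ! l"
        using l n_def by (simp add: nth_rotate)
      finally show "rotate (length (h pre)) x ! l = rotate (length (h pre')) x ! l" .
    qed
    then show ?thesis using rotate_inj_prim[OF xp] n_def by blast
  qed
  obtain w1 s where ws: "w = w1 @ a # s" "a \<notin> set w1" using aw by (metis split_list_first)
  define phi where "phi = length (h w1)"
  define z where "z = rotate phi x"
  have lz: "length z = n" using z_def n_def by simp
  have zpow: "concat (replicate N z) ! l = x ! ((phi + l) mod n)" if "l < N * n" for N l
  proof -
    have "concat (replicate N z) ! l = z ! (l mod n)" using that lz nth_concat_replicate by metis
    also have "\<dots> = x ! ((phi + l mod n) mod n)" using z_def n_def n0 by (simp add: nth_rotate)
    also have "\<dots> = x ! ((phi + l) mod n)" by (simp add: mod_add_right_eq)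
    finally show ?thesis .
  qed
  have Pw: "h mid = take (length (h mid)) (concat (replicate N z))"
    if "w = pre @ mid @ post" "length (h pre) mod n = phi mod n" "length (h mid) \<le> N * n" for pre mid post N
  proof (rule nth_equalityI)
    show "length (h mid) = length (take (length (h mid)) (concat (replicate N z)))"
      using that(3) lz by simp
    fix l assume l: "l < length (h mid)"
    have "h mid ! l = x ! ((length (h pre) + l) mod n)" using F[OF that(1) l] .
    also have "\<dots> = x ! ((phi + l) mod n)" using that(2) by (metis mod_add_left_eq)
    also have "\<dots> = concat (replicate N z) ! l" using zpow[of l N] l that(3) by simp
    finally show "h mid ! l = take (length (h mid)) (concat (replicate N z)) ! l" using l by simp
  qed
  have gapz: "\<exists>m\<ge>1. h (a # v') = concat (replicate m z)"
    if "w = pre @ a # v' @ a # post" for pre v' post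
  proof -
    have p1: "length (h pre) mod n = phi mod n" using phase[of pre "v' @ a # post" w1 s] that ws phi_def by simp
    have p2: "length (h (pre @ a # v')) mod n = phi mod n"
      using phase[of "pre @ a # v'" post w1 s] that ws phi_def by simp
    have "h (pre @ a # v') = h pre @ h (a # v')" using mor_app[OF hm] by simp
    then have "(length (h pre) + length (h (a # v'))) mod n = length (h pre) mod n" using p1 p2 by simp
    then have dv: "n dvd length (h (a # v'))" by (rule mod_add_dvd)
    define m where "m = length (h (a # v')) div n"
    have lm: "length (h (a # v')) = m * n" using dv m_def by simp
    have "h (a # v') = h [a] @ h v'" by (rule mor_single[OF hm])
    then have "length (h (a # v')) \<ge> n" using ha n_def by simp
    then have m1: "m \<ge> 1" using lm n0 by (metis less_one mult_is_0 not_less nat_mult_1 le_zero_eq)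
    have "h (a # v') = take (length (h (a # v'))) (concat (replicate m z))"
      by (rule Pw[of pre "a # v'" "a # post" m]) (use that p1 lm in auto)
    then have "h (a # v') = concat (replicate m z)" using lm lz by simp
    then show ?thesis using m1 by blast
  qed
  show ?thesis
  proof (cases "a \<in> set s")
    case False
    have "suffix_comparable (h w1) (h [])" unfolding suffix_comparable_def
      by (intro exI[of _ "h w1"] exI[of _ "[]"]) (simp add: mor_Nil[OF hm])
    moreover have "prefix_comparable (h []) (h s)" unfolding prefix_comparable_def
      by (intro exI[of _ "[]"] exI[of _ "h s"]) (simp add: mor_Nil[OF hm])
    ultimately show ?thesis using ws False hI
      by (intro exI[of _ 0] exI[of _ a] exI[of _ w1] exI[of _ "[]"] exI[of _ s] bexI[of _ h]) auto
  next
    case True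
    then obtain v s' where s: "s = v @ a # s'" "a \<notin> set v" by (metis split_list_first)
    have wv: "w = w1 @ a # v @ a # s'" using ws s by simp
    obtain m where m: "m \<ge> 1" "h (a # v) = concat (replicate m z)" using gapz[OF wv] by blast
    have gap: "v' = v" if eqw: "w = pre @ a # v' @ a # post" and av: "a \<notin> set v'" for pre v' post
    proof -
      obtain m' where m': "m' \<ge> 1" "h (a # v') = concat (replicate m' z)" using gapz[OF eqw] by blast
      have "h (concat (replicate m' (a # v))) = concat (replicate (m' * m) z)"
        using mor_concat_replicate[OF hm] m(2) concat_replicate_mult by metis
      moreover have "h (concat (replicate m (a # v'))) = concat (replicate (m * m') z)"
        using mor_concat_replicate[OF hm] m'(2) concat_replicate_mult by metis
      ultimately have "h (concat (replicate m' (a # v))) = h (concat (replicate m (a # v')))"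
        by (simp add: mult.commute)
      then have eq: "concat (replicate m' (a # v)) = concat (replicate m (a # v'))" using hi by (simp add: inj_eq)
      have "v = takeWhile (\<lambda>c. c \<noteq> a) (tl (concat (replicate m' (a # v))))"
        using takeWhile_pow[OF s(2) m'(1)] by simp
      also have "\<dots> = v'" using eq takeWhile_pow[OF av m(1)] by simp
      finally show ?thesis by simp
    qed
    obtain k w3 where kw: "a \<notin> set w3" "a # s = concat (replicate k (a # v)) @ a # w3"
      using decomp[of w a v w1 s] gap ws(1) by blast
    have wf: "w = w1 @ concat (replicate k (a # v)) @ a # w3" using ws(1) kw(2) by simp
    define N where "N = phi + 1"
    have Nn: "phi \<le> N * n"
    proof -
      have "phi \<le> phi * n" using n0 by simp
      also have "\<dots> \<le> N * n" using N_def by simp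
      finally show ?thesis .
    qed
    define D where "D = N * n - phi"
    have hw1: "h w1 = drop D (concat (replicate N z))"
    proof (rule nth_equalityI)
      show "length (h w1) = length (drop D (concat (replicate N z)))"
        using lz Nn D_def phi_def by simp
      fix l assume l: "l < length (h w1)"
      have "h w1 ! l = x ! ((length (h []) + l) mod n)" using F[of "[]" w1 "a # s" l] ws(1) l by simp
      also have "\<dots> = x ! (l mod n)" using mor_Nil[OF hm] by simp
      also have "\<dots> = x ! ((N * n + l) mod n)" by simp
      also have "N * n + l = phi + (D + l)" using Nn D_def by simp
      also have "x ! ((phi + (D + l)) mod n) = concat (replicate N z) ! (D + l)"
        using zpow[of "D + l" N] l phi_def Nn D_def by simp
      also have "\<dots> = drop D (concat (replicate N z)) ! l"
        using Nn D_def lz by simp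
      finally show "h w1 ! l = drop D (concat (replicate N z)) ! l" .
    qed
    have zN: "concat (replicate N z) = take D (concat (replicate N z)) @ h w1"
      using hw1 by simp
    have zm: "concat (replicate m z) = h [a] @ h v" using m(2) mor_single[OF hm, of a v] by simp
    have "concat (replicate N z) @ h [a] @ h v = concat (replicate m z) @ take D (concat (replicate N z)) @ h w1"
    proof -
      have "concat (replicate N z) @ h [a] @ h v = concat (replicate (N + m) z)"
        using zm by (simp add: concat_replicate_add)
      also have "\<dots> = concat (replicate m z) @ concat (replicate N z)"
        by (simp add: concat_replicate_add[symmetric] add.commute)
      finally show ?thesis using zN by simp
    qed
    then have sc: "suffix_comparable (h w1) (h v)" unfolding suffix_comparable_def
      by (intro exI[of _ "concat (replicate N z) @ h [a]"] exI[of _ "concat (replicate m z) @ take D (concat (replicate N z))"]) simp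
    define pl where "pl = w1 @ concat (replicate k (a # v))"
    have wpl: "w = pl @ a # w3 @ []" using wf pl_def by simp
    have ph: "length (h pl) mod n = phi mod n" using phase[of pl "w3" w1 s] wpl ws(1) phi_def by simp
    define L where "L = length (h (a # w3))"
    have LN: "L \<le> (L + m) * n"
    proof -
      have "L \<le> L * n" using n0 by simp
      also have "\<dots> \<le> (L + m) * n" by simp
      finally show ?thesis .
    qed
    have "h (a # w3) = take L (concat (replicate (L + m) z))"
      using Pw[of pl "a # w3" "[]" "L + m"] wpl ph LN L_def by simp
    then obtain Rest where Rest: "concat (replicate (L + m) z) = h (a # w3) @ Rest"
      by (metis append_take_drop_id)
    moreover have "concat (replicate (L + m) z) = h [a] @ h v @ concat (replicate L z)"
    proof -
      have "concat (replicate (L + m) z) = concat (replicate (m + L) z)" by (simp add: add.commute)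
      also have "\<dots> = concat (replicate m z) @ concat (replicate L z)" by (rule concat_replicate_add)
      finally show ?thesis using zm by simp
    qed
    moreover have "h (a # w3) = h [a] @ h w3" by (rule mor_single[OF hm])
    ultimately have "h [a] @ h w3 @ Rest = h [a] @ h v @ concat (replicate L z)" using Rest by simp
    then have "h w3 @ Rest = h v @ concat (replicate L z)" by simp
    then have pc: "prefix_comparable (h v) (h w3)" unfolding prefix_comparable_def by blast
    show ?thesis using wf ws(2) s(2) kw(1) sc pc hI
      by (intro exI[of _ k] exI[of _ a] exI[of _ w1] exI[of _ v] exI[of _ w3] bexI[of _ h]) auto
  qed
qed

theorem theorem9:
  fixes w :: "'a::finite list"
    and I :: "('a list \<Rightarrow> 'b::finite list) set"
  assumes "card (UNIV :: 'a set) \<ge> 2" and "card (UNIV :: 'b set) \<ge> 2"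
    and "w \<noteq> []"
    and "I = inj_morphisms"
  shows "(exp_I I w = \<infinity> \<longleftrightarrow> exp_I I w > ereal (real (length w)))
       \<and> (exp_I I w > ereal (real (length w)) \<longleftrightarrow>
           (\<exists>h\<in>I. \<exists>a\<in>set w. \<exists>x r. primitive x \<and> is_rat_pow (h w) x r
                                   \<and> length (h [a]) \<ge> length x))
       \<and> ((\<exists>h\<in>I. \<exists>a\<in>set w. \<exists>x r. primitive x \<and> is_rat_pow (h w) x r
                                   \<and> length (h [a]) \<ge> length x) \<longleftrightarrow>
          (\<exists>(k::nat) (a::'a) w1 w2 w3. \<exists>h\<in>I.
              a \<notin> set w1 \<and> a \<notin> set w2 \<and> a \<notin> set w3 \<and>
              w = w1 @ concat (replicate k (a # w2)) @ a # w3 \<and>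
              suffix_comparable (h w1) (h w2) \<and> prefix_comparable (h w2) (h w3)))"
proof -
  obtain c :: 'b where True by blast
  have "\<exists>d::'b. d \<noteq> c"
  proof (rule ccontr)
    assume "\<not> ?thesis"
    then have "(UNIV :: 'b set) \<subseteq> {c}" by auto
    then have "card (UNIV :: 'b set) \<le> card {c}" by (intro card_mono) auto
    then show False using assms(2) by simp
  qed
  then obtain d :: 'b where cd: "c \<noteq> d" by metis
  let ?P1 = "exp_I I w = \<infinity>"
  let ?P2 = "exp_I I w > ereal (real (length w))"
  let ?P3 = "\<exists>h\<in>I. \<exists>a\<in>set w. \<exists>x r. primitive x \<and> is_rat_pow (h w) x r \<and> length (h [a]) \<ge> length x"
  let ?P4 = "\<exists>(k::nat) (a::'a) w1 w2 w3. \<exists>h\<in>I.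
              a \<notin> set w1 \<and> a \<notin> set w2 \<and> a \<notin> set w3 \<and>
              w = w1 @ concat (replicate k (a # w2)) @ a # w3 \<and>
              suffix_comparable (h w1) (h w2) \<and> prefix_comparable (h w2) (h w3)"
  have 12: "?P1 \<Longrightarrow> ?P2" by simp
  have 23: "?P2 \<Longrightarrow> ?P3" by (rule two_imp_three[OF _ assms(4)])
  have 34: "?P3 \<Longrightarrow> ?P4"
  proof -
    assume ?P3
    then obtain h a x r where "h \<in> (inj_morphisms :: ('a list \<Rightarrow> 'b list) set)" "a \<in> set w" "primitive x" "is_rat_pow (h w) x r"
      "length (h [a]) \<ge> length x" unfolding assms(4) by blast
    then show ?P4 unfolding assms(4) by (rule three_imp_four)
  qed
  have 41: "?P4 \<Longrightarrow> ?P1"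
  proof -
    assume ?P4
    then obtain k a w1 w2 w3 h where "h \<in> (inj_morphisms :: ('a list \<Rightarrow> 'b list) set)" "a \<notin> set w1" "a \<notin> set w2" "a \<notin> set w3"
      "w = w1 @ concat (replicate k (a # w2)) @ a # w3"
      "suffix_comparable (h w1) (h w2)" "prefix_comparable (h w2) (h w3)" unfolding assms(4) by blast
    then show ?P1 unfolding assms(4) by (rule four_imp_one[OF cd])
  qed
  have e1: "?P1 = ?P2"
  proof
    assume ?P1 then show ?P2 by (rule 12)
  next
    assume ?P2 then show ?P1 by (rule 41[OF 34[OF 23]])
  qed
  have e2: "?P2 = ?P3"
  proof
    assume ?P2 then show ?P3 by (rule 23)
  next
    assume ?P3 then show ?P2 by (rule 12[OF 41[OF 34]])
  qed
  have e3: "?P3 = ?P4"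
  proof
    assume ?P3 then show ?P4 by (rule 34)
  next
    assume ?P4 then show ?P3 by (rule 23[OF 12[OF 41]])
  qed
  show ?thesis using e1 e2 e3 by (intro conjI)
qed

end
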